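(* There exist an environment $E$ and a total preorder $\succeq$ on $\Pi^E$ such that $\succeq\in\mathrm{Ord}_{\mathrm{LAR}}(E)$ but $\succeq\notin\mathrm{Ord}_{\mathrm{ONMR}}(E)$.
   Context: An environment is a tuple $E=(\mathcal S,\mathcal A,\mathcal T,\mathcal I)$ where $\mathcal S,\mathcal A$ are finite nonempty sets, $\mathcal T:\mathcal S\times\mathcal A\to\Delta(\mathcal S)$ and $\mathcal I\in\Delta(\mathcal S)$. A policy is a map $\pi:\mathcal S\to\Delta(\mathcal A)$ (stationary, possibly stochastic); $\Pi^E$ denotes the set of all policies. A trajectory $\xi=(s_0,a_0,s_1,a_1,\dots)$ is generated under $\pi$ by $s_0\sim\mathcal I$, $a_t\sim\pi(s_t)$, $s_{t+1}\sim\mathcal T(s_t,a_t)$; $\mathbb E^\pi_\xi$ denotes expectation under this distribution. An objective-specification formalism $X$ assigns to each environment $E$ a set of objective specifications, each inducing a total preorder $\succeq$ on $\Pi^E$; $\mathrm{Ord}_X(E)$ is the set of total preorders so induced. A specification defining a scalar $J:\Pi^E\to\mathbb R$ induces $\pi_1\succeq\pi_2\iff J(\pi_1)\ge J(\pi_2)$. LAR: specification $(\mathcal R)$, $\mathcal R:\mathcal S\times\mathcal A\times\mathcal S\to\mathbb R$, $J(\pi)=\lim_{N\to\infty}\frac1N\mathbb E^\pi_\xi[\sum_{t=0}^{N-1}\mathcal R(s_t,a_t,s_{t+1})]$. ONMR: specification $(\mathcal R,f,\gamma)$ with $\mathcal R:\mathcal S\times\mathcal A\times\mathcal S\to\mathbb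 R$, $f:\mathbb R\to\mathbb R$, $\gamma\in[0,1)$; $J(\pi)=f\big(\mathbb E^\pi_\xi[\sum_{t=0}^\infty\gamma^t\mathcal R(s_t,a_t,s_{t+1})]\big)$. *)

theory Defs
  imports "HOL-Probability.Probability"
begin

text \<open>Environments with states and actions drawn from nat (finite subsets);
  this covers every finite environment up to renaming.\<close>

record env =
  St :: "nat set"
  Ac :: "nat set"
  Tr :: "nat \<Rightarrow> nat \<Rightarrow> nat pmf"
  In :: "nat pmf"

definition valid_env :: "env \<Rightarrow> bool" where
  "valid_env E \<longleftrightarrow> finite (St E) \<and> St E \<noteq> {} \<and> finite (Ac E) \<and> Ac E \<noteq> {}
     \<and> (\<forall>s\<in>St E. \<forall>a\<in>Ac E. set_pmf (Tr E s a) \<subseteq> St E)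
     \<and> set_pmf (In E) \<subseteq> St E"

text \<open>Stationary stochastic policies S -> Delta(A); values outside S are fixed
  to a dummy value so that policies correspond one-to-one to maps on S.\<close>
definition policies :: "env \<Rightarrow> (nat \<Rightarrow> nat pmf) set" where
  "policies E = {\<pi>. (\<forall>s\<in>St E. set_pmf (\<pi> s) \<subseteq> Ac E) \<and> (\<forall>s. s \<notin> St E \<longrightarrow> \<pi> s = return_pmf 0)}"

fun traj :: "env \<Rightarrow> (nat \<Rightarrow> nat pmf) \<Rightarrow> nat \<Rightarrow> ((nat \<times> nat \<times> nat) list \<times> nat) pmf" where
  "traj E \<pi> 0 = map_pmf (\<lambda>s. ([], s)) (In E)"
| "traj E \<pi> (Suc n) = bind_pmf (traj E \<pi> n) (\<lambda>(h, s).
      bind_pmf (\<pi> s) (\<lambda>a. map_pmf (\<lambda>s'. (h @ [(s, a, s')], s')) (Tr E s a)))"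

definition disc_ret :: "env \<Rightarrow> (nat \<Rightarrow> nat pmf) \<Rightarrow> (nat \<Rightarrow> nat \<Rightarrow> nat \<Rightarrow> real) \<Rightarrow> real \<Rightarrow> nat \<Rightarrow> real" where
  "disc_ret E \<pi> R \<gamma> N = measure_pmf.expectation (traj E \<pi> N)
     (\<lambda>(h, s). \<Sum>t<length h. \<gamma> ^ t * (case h ! t of (s0, a, s1) \<Rightarrow> R s0 a s1))"

definition J_LAR :: "env \<Rightarrow> (nat \<Rightarrow> nat \<Rightarrow> nat \<Rightarrow> real) \<Rightarrow> (nat \<Rightarrow> nat pmf) \<Rightarrow> real" where
  "J_LAR E R \<pi> = lim (\<lambda>N. disc_ret E \<pi> R 1 N / real N)"

text \<open>ONMR objective: f(E[sum_{t=0}^\<infinity> gamma^t R(s_t,a_t,s_{t+1})]); the expectation of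
  the (bounded) infinite discounted sum is the limit of the expectations of the
  partial sums (dominated convergence).\<close>
definition J_ONMR :: "env \<Rightarrow> (nat \<Rightarrow> nat \<Rightarrow> nat \<Rightarrow> real) \<Rightarrow> (real \<Rightarrow> real) \<Rightarrow> real
     \<Rightarrow> (nat \<Rightarrow> nat pmf) \<Rightarrow> real" where
  "J_ONMR E R f \<gamma> \<pi> = f (lim (\<lambda>N. disc_ret E \<pi> R \<gamma> N))"

definition induced_ord :: "env \<Rightarrow> ((nat \<Rightarrow> nat pmf) \<Rightarrow> real) \<Rightarrow> (nat \<Rightarrow> nat pmf) rel" where
  "induced_ord E J = {(\<pi>1, \<pi>2). \<pi>1 \<in> policies E \<and> \<pi>2 \<in> policies E \<and> J \<pi>1 \<ge> J \<pi>2}"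

definition Ord_LAR :: "env \<Rightarrow> (nat \<Rightarrow> nat pmf) rel set" where
  "Ord_LAR E = {induced_ord E (J_LAR E R) | R. True}"

definition Ord_ONMR :: "env \<Rightarrow> (nat \<Rightarrow> nat pmf) rel set" where
  "Ord_ONMR E = {induced_ord E (J_ONMR E R f \<gamma>) | R f \<gamma>. 0 \<le> \<gamma> \<and> \<gamma> < 1}"

end

theory Submission
  imports Defs
begin


lemma exp_bind:
  fixes h :: "'b \<Rightarrow> real"
  assumes "finite (set_pmf p)" "\<And>x. x \<in> set_pmf p \<Longrightarrow> finite (set_pmf (f x))"
  shows "measure_pmf.expectation (bind_pmf p f) h
       = measure_pmf.expectation p (\<lambda>x. measure_pmf.expectation (f x) h)"
  apply (subst pmf_expectation_bind[of "set_pmf p"])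
  using assms apply auto[3]
  apply (subst integral_measure_pmf[of "set_pmf p"])
  using assms by auto

definition fin_env where
  "fin_env E \<pi> \<longleftrightarrow> finite (set_pmf (In E)) \<and> (\<forall>s. finite (set_pmf (\<pi> s))) \<and> (\<forall>s a. finite (set_pmf (Tr E s a)))"

lemma traj_props:
  assumes "fin_env E \<pi>"
  shows "finite (set_pmf (traj E \<pi> n)) \<and> (\<forall>x\<in>set_pmf (traj E \<pi> n). length (fst x) = n)"
proof (induction n)
  case 0
  then show ?case using assms by (auto simp: fin_env_def)
next
  case (Suc n)
  have fin: "finite (set_pmf (traj E \<pi> (Suc n)))"
    using Suc assms unfolding fin_env_def by (auto simp: split_beta)
  moreover have "\<forall>x\<in>set_pmf (traj E \<pi> (Suc n)). length (fst x) = Suc n"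
    using Suc by (auto simp: split_beta)
  ultimately show ?case by blast
qed

lemma exp_traj_Suc:
  fixes G :: "(nat \<times> nat \<times> nat) list \<times> nat \<Rightarrow> real"
  assumes "fin_env E \<pi>"
  shows "measure_pmf.expectation (traj E \<pi> (Suc n)) G =
    measure_pmf.expectation (traj E \<pi> n) (\<lambda>(h, s). measure_pmf.expectation (\<pi> s)
       (\<lambda>a. measure_pmf.expectation (Tr E s a) (\<lambda>s'. G (h @ [(s, a, s')], s'))))"
proof -
  have fin: "finite (set_pmf (traj E \<pi> n))" using traj_props[OF assms] by blast
  have A: "\<forall>s. finite (set_pmf (\<pi> s))" "\<forall>s a. finite (set_pmf (Tr E s a))"
    using assms by (auto simp: fin_env_def)
  show ?thesis
    apply (simp only: traj.simps)
    apply (subst exp_bind)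
    using fin A apply (auto simp: split_beta)[2]
    apply (rule Bochner_Integration.integral_cong[OF refl])
    apply (simp add: split_beta)
    apply (subst exp_bind)
    using A by auto
qed



definition Fsum :: "real \<Rightarrow> (nat \<Rightarrow> nat \<Rightarrow> nat \<Rightarrow> real) \<Rightarrow> (nat \<times> nat \<times> nat) list \<Rightarrow> real" where
  "Fsum \<gamma> R h = (\<Sum>t<length h. \<gamma> ^ t * (case h ! t of (s0, a, s1) \<Rightarrow> R s0 a s1))"

lemma Fsum_snoc: "Fsum \<gamma> R (h @ [(s,a,s')]) = Fsum \<gamma> R h + \<gamma> ^ length h * R s a s'"
  unfolding Fsum_def by (simp add: nth_append)

definition rho where
  "rho E \<pi> R s = measure_pmf.expectation (\<pi> s) (\<lambda>a. measure_pmf.expectation (Tr E s a) (\<lambda>s'. R s a s'))"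

lemma exp_cong:
  fixes f g :: "'a \<Rightarrow> real"
  assumes "\<And>x. x \<in> set_pmf p \<Longrightarrow> f x = g x"
  shows "measure_pmf.expectation p f = measure_pmf.expectation p g"
  apply (rule integral_cong_AE)
  using assms by (auto simp: AE_measure_pmf_iff)

lemma disc_ret_0: "disc_ret E \<pi> R \<gamma> 0 = 0"
  unfolding disc_ret_def by (simp add: split_beta)

lemma disc_ret_Suc:
  assumes "fin_env E \<pi>"
  shows "disc_ret E \<pi> R \<gamma> (Suc n) = disc_ret E \<pi> R \<gamma> n
      + \<gamma> ^ n * measure_pmf.expectation (traj E \<pi> n) (\<lambda>x. rho E \<pi> R (snd x))"
proof -
  have P: "finite (set_pmf (traj E \<pi> n))" "\<forall>x\<in>set_pmf (traj E \<pi> n). length (fst x) = n"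
    using traj_props[OF assms] by blast+
  have A: "\<forall>s. finite (set_pmf (\<pi> s))" "\<forall>s a. finite (set_pmf (Tr E s a))"
    using assms by (auto simp: fin_env_def)
  have "disc_ret E \<pi> R \<gamma> (Suc n) = measure_pmf.expectation (traj E \<pi> (Suc n)) (\<lambda>x. Fsum \<gamma> R (fst x))"
    unfolding disc_ret_def Fsum_def by (rule Bochner_Integration.integral_cong) (auto simp: split_beta)
  also have "\<dots> = measure_pmf.expectation (traj E \<pi> n) (\<lambda>x. Fsum \<gamma> R (fst x) + \<gamma> ^ n * rho E \<pi> R (snd x))"
    apply (subst exp_traj_Suc[OF assms])
    apply (rule exp_cong)
    subgoal for x
      using P(2) A
      by (auto simp: split_beta Fsum_snoc rho_def integrable_measure_pmf_finite)
    done
  also have "\<dots> = measure_pmf.expectation (traj E \<pi> n) (\<lambda>x. Fsum \<gamma> R (fst x))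
       + \<gamma> ^ n * measure_pmf.expectation (traj E \<pi> n) (\<lambda>x. rho E \<pi> R (snd x))"
    using P(1) by (simp add: integrable_measure_pmf_finite)
  also have "measure_pmf.expectation (traj E \<pi> n) (\<lambda>x. Fsum \<gamma> R (fst x)) = disc_ret E \<pi> R \<gamma> n"
    unfolding disc_ret_def Fsum_def by (rule Bochner_Integration.integral_cong) (auto simp: split_beta)
  finally show ?thesis .
qed

lemma marg_Suc:
  fixes g :: "nat \<Rightarrow> real"
  assumes "fin_env E \<pi>"
  shows "measure_pmf.expectation (traj E \<pi> (Suc n)) (\<lambda>x. g (snd x))
     = measure_pmf.expectation (traj E \<pi> n) (\<lambda>x. rho E \<pi> (\<lambda>s a s'. g s') (snd x))"
  apply (subst exp_traj_Suc[OF assms])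
  by (rule Bochner_Integration.integral_cong) (auto simp: split_beta rho_def)



definition E0 :: env where
  "E0 = \<lparr>St = {0,1}, Ac = {0,1}, Tr = (\<lambda>s a. return_pmf (if s = 0 \<and> a = 0 then 0 else 1)),
         In = return_pmf 0\<rparr>"

definition bpmf :: "real \<Rightarrow> nat pmf" where
  "bpmf x = map_pmf (\<lambda>b. if b then 1 else 0) (bernoulli_pmf x)"

definition pol :: "real \<Rightarrow> real \<Rightarrow> nat \<Rightarrow> nat pmf" where
  "pol p q s = (if s = 0 then bpmf p else if s = 1 then bpmf q else return_pmf 0)"

lemma exp_bpmf:
  fixes k :: "nat \<Rightarrow> real"
  assumes "0 \<le> x" "x \<le> 1"
  shows "measure_pmf.expectation (bpmf x) k = x * k 1 + (1 - x) * k 0"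
  unfolding bpmf_def using assms by (simp add: mult.commute)

lemma set_bpmf: "set_pmf (bpmf x) \<subseteq> {0,1}"
  unfolding bpmf_def by auto

lemma fin_E0: "fin_env E0 (pol p q)"
  unfolding fin_env_def E0_def pol_def
  using set_bpmf by (auto intro: finite_subset)

lemma valid_E0: "valid_env E0"
  unfolding valid_env_def E0_def by auto

lemma pol_in: "pol p q \<in> policies E0"
  unfolding policies_def E0_def pol_def using set_bpmf by auto

lemma rho0:
  assumes "0 \<le> p" "p \<le> 1"
  shows "rho E0 (pol p q) R 0 = (1 - p) * R 0 0 0 + p * R 0 1 1"
  unfolding rho_def using assms by (simp add: pol_def exp_bpmf E0_def algebra_simps)

lemma rho1:
  assumes "0 \<le> q" "q \<le> 1"
  shows "rho E0 (pol p q) R 1 = (1 - q) * R 1 0 1 + q * R 1 1 1"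
  unfolding rho_def using assms by (simp add: pol_def exp_bpmf E0_def algebra_simps)

lemma marg:
  fixes g :: "nat \<Rightarrow> real"
  assumes "0 \<le> p" "p \<le> 1" "0 \<le> q" "q \<le> 1"
  shows "measure_pmf.expectation (traj E0 (pol p q) n) (\<lambda>x. g (snd x))
        = (1 - p) ^ n * g 0 + (1 - (1 - p) ^ n) * g 1"
proof (induction n arbitrary: g)
  case 0
  then show ?case by (simp add: E0_def)
next
  case (Suc n)
  show ?case
    apply (subst marg_Suc[OF fin_E0])
    apply (subst Suc.IH)
    using assms by (simp add: rho0 rho1[OF assms(3,4), simplified] algebra_simps)
qed

lemma disc_ret_E0:
  assumes "0 \<le> p" "p \<le> 1" "0 \<le> q" "q \<le> 1"
  shows "disc_ret E0 (pol p q) R \<gamma> N = (\<Sum>n<N. \<gamma> ^ n * ((1 - p) ^ n * ((1 - p) * R 0 0 0 + p * R 0 1 1)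
       + (1 - (1 - p) ^ n) * ((1 - q) * R 1 0 1 + q * R 1 1 1)))"
proof (induction N)
  case 0
  then show ?case by (simp add: disc_ret_0)
next
  case (Suc N)
  show ?case
    apply (subst disc_ret_Suc[OF fin_E0])
    apply (subst marg[OF assms])
    using Suc assms by (simp add: rho0 rho1[OF assms(3,4), simplified])
qed



definition RL :: "nat \<Rightarrow> nat \<Rightarrow> nat \<Rightarrow> real" where
  "RL s a s' = (if s = 1 \<and> a = 1 then 1 else 0)"

lemma JLAR_E0:
  assumes "0 \<le> p" "p \<le> 1" "0 \<le> q" "q \<le> 1"
  shows "J_LAR E0 RL (pol p q) = (if p > 0 then q else 0)"
proof -
  have D: "disc_ret E0 (pol p q) RL 1 N = (\<Sum>n<N. (1 - (1 - p) ^ n) * q)" for N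
    by (subst disc_ret_E0[OF assms]) (simp add: RL_def)
  show ?thesis
  proof (cases "p > 0")
    case False
    then have "p = 0" using assms by auto
    then show ?thesis unfolding J_LAR_def D by simp
  next
    case True
    have S: "(\<Sum>n<N. (1 - (1 - p) ^ n) * q) = real N * q - q * (((1 - p) ^ N - 1) / ((1 - p) - 1))" for N
    proof -
      have "(\<Sum>n<N. (1 - (1 - p) ^ n) * q) = real N * q - q * (\<Sum>n<N. (1 - p) ^ n)"
        by (simp add: algebra_simps sum_subtractf sum_distrib_left)
      also have "(\<Sum>n<N. (1 - p) ^ n) = ((1 - p) ^ N - 1) / ((1 - p) - 1)"
        using True by (intro geometric_sum) auto
      finally show ?thesis .
    qed
    have L: "(\<lambda>N. q - (q / p) * (1 - (1 - p) ^ N) * (1 / real N)) \<longlonglongrightarrow> q - (q / p) * (1 - 0) * 0"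
      using True assms
      by (intro tendsto_intros LIMSEQ_power_zero) auto
    have ev: "\<forall>\<^sub>F N in sequentially. q - (q / p) * (1 - (1 - p) ^ N) * (1 / real N)
               = disc_ret E0 (pol p q) RL 1 N / real N"
      using eventually_gt_at_top[of "0::nat"]
    proof eventually_elim
      case (elim N)
      then show ?case unfolding D S using True by (simp add: field_simps)
    qed
    have "(\<lambda>N. disc_ret E0 (pol p q) RL 1 N / real N) \<longlonglongrightarrow> q"
      using Lim_transform_eventually[OF L ev] by simp
    then show ?thesis unfolding J_LAR_def using True by (simp add: limI)
  qed
qed

definition Vf :: "(nat \<Rightarrow> nat \<Rightarrow> nat \<Rightarrow> real) \<Rightarrow> real \<Rightarrow> real \<Rightarrow> real \<Rightarrow> real" where
  "Vf R \<gamma> p q = ((1 - q) * R 1 0 1 + q * R 1 1 1) / (1 - \<gamma>)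
     + (((1 - p) * R 0 0 0 + p * R 0 1 1) - ((1 - q) * R 1 0 1 + q * R 1 1 1)) / (1 - \<gamma> * (1 - p))"

lemma lim_disc_E0:
  assumes "0 \<le> p" "p \<le> 1" "0 \<le> q" "q \<le> 1" "0 \<le> \<gamma>" "\<gamma> < 1"
  shows "lim (\<lambda>N. disc_ret E0 (pol p q) R \<gamma> N) = Vf R \<gamma> p q"
proof -
  define r0 where "r0 = (1 - p) * R 0 0 0 + p * R 0 1 1"
  define r1 where "r1 = (1 - q) * R 1 0 1 + q * R 1 1 1"
  have g1: "(\<lambda>n. \<gamma> ^ n) sums (1 / (1 - \<gamma>))" using assms by (intro geometric_sums) auto
  have g2: "(\<lambda>n. (\<gamma> * (1 - p)) ^ n) sums (1 / (1 - \<gamma> * (1 - p)))"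
  proof (intro geometric_sums)
    have "\<gamma> * (1 - p) \<le> \<gamma>" using assms by (simp add: mult_left_le)
    moreover have "0 \<le> \<gamma> * (1 - p)" using assms by simp
    ultimately show "norm (\<gamma> * (1 - p)) < 1" using assms by simp
  qed
  have sm: "(\<lambda>n. \<gamma> ^ n * r1 + (\<gamma> * (1 - p)) ^ n * (r0 - r1)) sums
        (1 / (1 - \<gamma>) * r1 + 1 / (1 - \<gamma> * (1 - p)) * (r0 - r1))"
    by (intro sums_add sums_mult2 g1 g2)
  have D: "disc_ret E0 (pol p q) R \<gamma> N = (\<Sum>n<N. \<gamma> ^ n * r1 + (\<gamma> * (1 - p)) ^ n * (r0 - r1))" for N
    unfolding disc_ret_E0[OF assms(1-4)] r0_def[symmetric] r1_def[symmetric]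
    by (rule sum.cong) (auto simp: power_mult_distrib[symmetric] algebra_simps)
  have "(\<lambda>N. disc_ret E0 (pol p q) R \<gamma> N) \<longlonglongrightarrow> (1 / (1 - \<gamma>) * r1 + 1 / (1 - \<gamma> * (1 - p)) * (r0 - r1))"
    using sm unfolding sums_def D .
  then show ?thesis unfolding Vf_def r0_def[symmetric] r1_def[symmetric] by (simp add: limI)
qed



definition gg :: "(nat \<Rightarrow> nat \<Rightarrow> nat \<Rightarrow> real) \<Rightarrow> real \<Rightarrow> real \<Rightarrow> real" where
  "gg R \<gamma> q = R 0 1 1 - R 0 0 0 + \<gamma> / (1 - \<gamma>) * (((1 - q) * R 1 0 1 + q * R 1 1 1) - R 0 0 0)"

lemma Vabs0:
  fixes r0 r1 c g p u D :: real
  assumes u: "u \<noteq> 0" and D: "D \<noteq> 0"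
  shows "c/u + M/D = (c*D + M*u)/(u*D)"
    and "r0/u + p/D * (r1 - r0 + g/u*(c - r0)) = (r0*D + p*(u*(r1-r0)+g*(c-r0)))/(u*D)"
  using u D by (simp_all add: field_simps)
lemma Vabs:
  fixes r0 r1 c g p :: real
  assumes "0 < 1 - g" "0 < 1 - g + g * p"
  shows "c/(1-g) + ((1-p)*r0 + p*r1 - c)/(1-g*(1-p)) = r0/(1-g) + p/(1-g+g*p) * (r1 - r0 + g/(1-g)*(c - r0))"
proof -
  have e: "1-g*(1-p) = 1-g+g*p" by (simp add: algebra_simps)
  have u: "1 - g \<noteq> 0" and D: "1-g+g*p \<noteq> 0" using assms by auto
  show ?thesis unfolding e Vabs0[OF u D]
    by (simp add: algebra_simps)
qed

lemma Vg:
  assumes "0 \<le> p" "p \<le> 1" "0 \<le> \<gamma>" "\<gamma> < 1"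
  shows "Vf R \<gamma> p q = R 0 0 0 / (1 - \<gamma>) + p / (1 - \<gamma> + \<gamma> * p) * gg R \<gamma> q"
proof -
  have D: "1 - \<gamma> + \<gamma> * p > 0" using assms mult_nonneg_nonneg[of \<gamma> p] by linarith
  show ?thesis unfolding Vf_def gg_def by (rule Vabs) (use D assms in auto)
qed

lemma aff_aux: "(r1::real) - r0 + k * (((1 - q) * c0 + q * c1) - r0) =
   (r1 - r0 + k * (((1 - 1/2) * c0 + 1/2 * c1) - r0)) + (q - 1/2) * 2 *
   ((r1 - r0 + k * (((1 - 1) * c0 + 1 * c1) - r0)) - (r1 - r0 + k * (((1 - 1/2) * c0 + 1/2 * c1) - r0)))"
  by (simp add: field_simps)

lemma gg_affine: "gg R \<gamma> q = gg R \<gamma> (1/2) + (q - 1/2) * 2 * (gg R \<gamma> 1 - gg R \<gamma> (1/2))"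
  unfolding gg_def by (rule aff_aux)

lemma hsolve:
  fixes t \<gamma> :: real
  assumes "0 < t" "t \<le> 1" "0 \<le> \<gamma>" "\<gamma> < 1"
  shows "0 < t * (1 - \<gamma>) / (1 - \<gamma> * t) \<and> t * (1 - \<gamma>) / (1 - \<gamma> * t) \<le> 1
    \<and> (t * (1 - \<gamma>) / (1 - \<gamma> * t)) / (1 - \<gamma> + \<gamma> * (t * (1 - \<gamma>) / (1 - \<gamma> * t))) = t"
proof -
  have "\<gamma> * t \<le> \<gamma>" using mult_left_le[of t \<gamma>] assms by simp
  then have g: "\<gamma> * t < 1" using assms by simp
  have a: "0 < t * (1 - \<gamma>) / (1 - \<gamma> * t)" using assms g by simp
  have bb: "t * (1 - \<gamma>) \<le> 1 * (1 - \<gamma> * t)" using assms by (simp add: algebra_simps)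
  have b: "t * (1 - \<gamma>) / (1 - \<gamma> * t) \<le> 1"
    by (subst pos_divide_le_eq) (use g bb in auto)
  have c: "1 - \<gamma> + \<gamma> * (t * (1 - \<gamma>) / (1 - \<gamma> * t)) = (1 - \<gamma>) / (1 - \<gamma> * t)"
    using g by (simp add: field_simps)
  show ?thesis using a b c assms g by simp
qed

lemma key:
  assumes eq: "induced_ord E0 (J_LAR E0 RL) = induced_ord E0 (J_ONMR E0 R f \<gamma>)"
    and g: "0 \<le> \<gamma>" "\<gamma> < 1"
    and pq: "0 \<le> p1" "p1 \<le> 1" "0 \<le> q1" "q1 \<le> 1" "0 \<le> p2" "p2 \<le> 1" "0 \<le> q2" "q2 \<le> 1"
    and V: "Vf R \<gamma> p1 q1 = Vf R \<gamma> p2 q2"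
    and J: "(if p1 > 0 then q1 else 0) > (if p2 > 0 then q2 else (0::real))"
  shows False
proof -
  have "J_ONMR E0 R f \<gamma> (pol p1 q1) = J_ONMR E0 R f \<gamma> (pol p2 q2)"
    unfolding J_ONMR_def using lim_disc_E0 pq g V by simp
  then have "(pol p2 q2, pol p1 q1) \<in> induced_ord E0 (J_ONMR E0 R f \<gamma>)"
    unfolding induced_ord_def using pol_in by simp
  then have "(pol p2 q2, pol p1 q1) \<in> induced_ord E0 (J_LAR E0 RL)" using eq by simp
  then have "J_LAR E0 RL (pol p2 q2) \<ge> J_LAR E0 RL (pol p1 q1)" unfolding induced_ord_def by simp
  moreover have "J_LAR E0 RL (pol p1 q1) = (if p1 > 0 then q1 else 0)" by (rule JLAR_E0) (use pq in auto)
  moreover have "J_LAR E0 RL (pol p2 q2) = (if p2 > 0 then q2 else 0)" by (rule JLAR_E0) (use pq in auto)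
  ultimately show False using J by linarith
qed

lemma not_onmr: "induced_ord E0 (J_LAR E0 RL) \<notin> Ord_ONMR E0"
proof
  assume "induced_ord E0 (J_LAR E0 RL) \<in> Ord_ONMR E0"
  then obtain R f \<gamma> where eq: "induced_ord E0 (J_LAR E0 RL) = induced_ord E0 (J_ONMR E0 R f \<gamma>)"
    and g: "0 \<le> \<gamma>" "\<gamma> < 1" unfolding Ord_ONMR_def by blast
  note K = key[OF eq g]
  define a where "a = gg R \<gamma> (1/2)"
  define b where "b = gg R \<gamma> 1"
  have V0: "Vf R \<gamma> 0 0 = R 0 0 0 / (1 - \<gamma>)" using Vg[of 0 \<gamma> R 0] g by simp
  have V1: "Vf R \<gamma> 1 q = R 0 0 0 / (1 - \<gamma>) + gg R \<gamma> q" for q using Vg[of 1 \<gamma> R q] g by simp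
  consider "b = 0" | "a = 0" | "a * b < 0" | "a * b > 0"
    by (meson linorder_neqE_linordered_idom mult_eq_0_iff)
  then show False
  proof cases
    case 1
    show False by (rule K[of 1 1 0 0]) (use 1 V0 V1 b_def in auto)
  next
    case 2
    show False by (rule K[of 1 "1/2" 0 0]) (use 2 V0 V1 a_def in auto)
  next
    case 3
    have ab: "a - b \<noteq> 0" using 3 by auto
    obtain x where xd: "x = a / (a - b)" by blast
    have r: "0 < x \<and> x < 1"
      unfolding xd using 3 by (cases "a > 0") (auto simp: mult_less_0_iff divide_less_eq zero_less_divide_iff)
    define qs where "qs = 1/2 + x / 2"
    have q1: "0 < qs" using r unfolding qs_def by linarith
    have q2: "qs \<le> 1" using r unfolding qs_def by linarith
    note q = q1 q2
    have xa: "x * (a - b) = a" unfolding xd using ab by simp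
    have "gg R \<gamma> qs = a + x * (b - a)"
      using gg_affine[of R \<gamma> qs] unfolding qs_def a_def[symmetric] b_def[symmetric]
      by (simp add: algebra_simps)
    also have "\<dots> = 0" using xa by (simp add: algebra_simps)
    finally have gz: "gg R \<gamma> qs = 0" .
    show False by (rule K[of 1 qs 0 0]) (use q gz V0 V1 in auto)
  next
    case 4
    show False
    proof (cases "a / b \<le> 1")
      case True
      define t where "t = a / b"
      have t1: "0 < t" using 4 unfolding t_def by (simp add: zero_less_divide_iff zero_less_mult_iff)
      have t: "0 < t" "t \<le> 1" using t1 True unfolding t_def by simp_all
      define p' where "p' = t * (1 - \<gamma>) / (1 - \<gamma> * t)"
      have hp: "0 < p'" "p' \<le> 1" "p' / (1 - \<gamma> + \<gamma> * p') = t"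
        using hsolve[OF t g] unfolding p'_def by auto
      have "Vf R \<gamma> p' 1 = R 0 0 0 / (1 - \<gamma>) + t * b" using Vg[of p' \<gamma> R 1] hp g b_def by simp
      also have "\<dots> = Vf R \<gamma> 1 (1/2)" using V1 a_def t_def 4 by auto
      finally show False by (intro K[of p' 1 1 "1/2"]) (use hp in auto)
    next
      case False
      define t where "t = b / a"
      have x: "a / b > 1" using False by simp
      have te: "t = inverse (a / b)" unfolding t_def by simp
      have t1: "0 < t" unfolding te using x by (intro positive_imp_inverse_positive) simp
      have "inverse (a / b) < inverse 1" using x by (intro less_imp_inverse_less) auto
      then have t: "0 < t" "t \<le> 1" using t1 unfolding te by simp_all
      define p' where "p' = t * (1 - \<gamma>) / (1 - \<gamma> * t)"
      have hp: "0 < p'" "p' \<le> 1" "p' / (1 - \<gamma> + \<gamma> * p') = t"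
        using hsolve[OF t g] unfolding p'_def by auto
      have "Vf R \<gamma> p' (1/2) = R 0 0 0 / (1 - \<gamma>) + t * a" using Vg[of p' \<gamma> R "1/2"] hp g a_def by simp
      also have "\<dots> = Vf R \<gamma> 1 1" using V1 b_def t_def 4 by auto
      finally show False by (intro K[of 1 1 p' "1/2"]) (use hp in auto)
    qed
  qed
qed

theorem mainTheorem12:
  shows "\<exists>E ord. valid_env E \<and> preorder_on (policies E) ord \<and> total_on (policies E) ord
           \<and> ord \<in> Ord_LAR E \<and> ord \<notin> Ord_ONMR E"
proof (intro exI conjI)
  show "valid_env E0" by (rule valid_E0)
  show "preorder_on (policies E0) (induced_ord E0 (J_LAR E0 RL))"
    unfolding preorder_on_def induced_ord_def refl_on_def trans_def by auto
  show "total_on (policies E0) (induced_ord E0 (J_LAR E0 RL))"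
    unfolding total_on_def induced_ord_def by auto
  show "induced_ord E0 (J_LAR E0 RL) \<in> Ord_LAR E0" unfolding Ord_LAR_def by blast
  show "induced_ord E0 (J_LAR E0 RL) \<notin> Ord_ONMR E0" by (rule not_onmr)
qed


end
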